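(* In the setting below, if a PHB $\mathbf{E}$ is $\Delta^-$-stable but $\Delta^+$-unstable, then its destabilizing subbundle $\mathbf{L}^+$ is unique.
   Context: Fix distinct $x_1,\dots,x_n\in\mathbb{C}\mathbb{P}^1$. Weights $\beta=(\beta_1(x_i),\beta_2(x_i))_i$ with $0\le\beta_1(x_i)<\beta_2(x_i)<1$ form the weight space $Q$; put $\alpha=\beta_2-\beta_1$ and $\varepsilon_T(\alpha)=\sum_{i\in T}\alpha_i-\sum_{i\notin T}\alpha_i$. Walls are the intersections of $Q$ with hyperplanes $\varepsilon_T(\beta_2-\beta_1)=0$; chambers are components of the complement. All PHBs here are rank-2 parabolic Higgs bundles $(E,\Phi)$ over $\mathbb{C}\mathbb{P}^1$ whose underlying holomorphic bundle is trivial, with fixed determinant and trace-free Higgs field: $E$ has a line $E_{x_i,2}\subset E_{x_i}$ at each $x_i$ with weights $\beta_1(x_i)<\beta_2(x_i)$, $\Phi$ is a meromorphic $\mathrm{End}_0(E)\otimes K_{\mathbb{C}\mathbb{P}^1}$-valued section with at most simple poles at the $x_i$, residue mapping $E_{x_i}$ into $E_{x_i,2}$ and killing $E_{x_i,2}$. A parabolic line subbundle $L$ has weight $\beta_2(x_i)$ at $x_i$ if $L_{x_i}=E_{x_i,2}$, $\beta_1(x_i)$ otherwise; discrete data $S_L=\{i:L_{x_i}=E_{x_i,2}\}$. $(E,\Phi)$ is $\beta$-stable iff every $\Phi$-invariant line subbundle $L$ has $\varepsilon_{S_L}(\beta_2-\beta_1)<0$. Fix a point of $Q$ on exactly one wall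 $W$, with adjacent chambers $\Delta^\pm$, and $S$ the index set of $W$ normalized so that $\varepsilon_S(\beta_2-\beta_1)>0$ on $\Delta^+$. $\Delta^\pm$-stable means stable for weights in $\Delta^\pm$. A destabilizing subbundle of a $\Delta^-$-stable, $\Delta^+$-unstable $\mathbf{E}$ is a $\Phi$-invariant parabolic line subbundle for which the stability inequality holds in $\Delta^-$ but fails in $\Delta^+$. *)

theory Defs
  imports "HOL-Analysis.Analysis"
begin

text \<open>Marked points are indexed by a finite type 'n. A weight
 beta = (beta1, beta2) is a point of real^'n x real^'n.\<close>

definition weight_space :: "((real^'n) \<times> (real^'n)) set" where
  "weight_space = {(b1, b2). \<forall>i. 0 \<le> b1$i \<and> b1$i < b2$i \<and> b2$i < 1}"

definition alpha :: "(real^'n) \<times> (real^'n) \<Rightarrow> real^'n" where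
  "alpha b = snd b - fst b"

definition eps :: "'n set \<Rightarrow> real^'n \<Rightarrow> real" where
  "eps T a = (\<Sum>i\<in>T. a$i) - (\<Sum>i\<in>- T. a$i)"

definition wall_of :: "'n set \<Rightarrow> ((real^'n) \<times> (real^'n)) set" where
  "wall_of T = weight_space \<inter> {b. eps T (alpha b) = 0}"

definition walls :: "((real^'n) \<times> (real^'n)) set set" where
  "walls = range wall_of"

definition chambers :: "((real^'n) \<times> (real^'n)) set set" where
  "chambers = components (weight_space - \<Union>walls)"

definition cline :: "complex^2 \<Rightarrow> (complex^2) set" where
  "cline v = range (\<lambda>c. c *s v)"

definition is_line :: "(complex^2) set \<Rightarrow> bool" where
  "is_line L \<longleftrightarrow> (\<exists>v. v \<noteq> 0 \<and> L = cline v)"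

definition mtrace :: "complex^2^2 \<Rightarrow> complex" where
  "mtrace M = (\<Sum>i\<in>UNIV. M$i$i)"

text \<open>A PHB with trivial underlying bundle: flags ell i = E_{x_i,2} and
 the Higgs field Phi = sum_i A_i dz/(z - x_i), encoded by its residues A_i
 (sl2-valued, summing to zero by the residue theorem).\<close>

definition is_PHB :: "('n \<Rightarrow> (complex^2) set) \<Rightarrow> ('n \<Rightarrow> complex^2^2) \<Rightarrow> bool" where
  "is_PHB ell A \<longleftrightarrow>
     (\<forall>i. is_line (ell i)) \<and>
     (\<forall>i. mtrace (A i) = 0) \<and>
     (\<Sum>i\<in>UNIV. A i) = 0 \<and>
     (\<forall>i u. A i *v u \<in> ell i) \<and>
     (\<forall>i. \<forall>u\<in>ell i. A i *v u = 0)"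

definition S_of :: "('n \<Rightarrow> (complex^2) set) \<Rightarrow> (complex^2) set \<Rightarrow> 'n set" where
  "S_of ell L = {i. L = ell i}"

definition invariant :: "('n \<Rightarrow> complex^2^2) \<Rightarrow> (complex^2) set \<Rightarrow> bool" where
  "invariant A L \<longleftrightarrow> (\<forall>i. \<forall>u\<in>L. A i *v u \<in> L)"

definition stable :: "(real^'n) \<times> (real^'n) \<Rightarrow> ('n \<Rightarrow> (complex^2) set) \<Rightarrow> ('n \<Rightarrow> complex^2^2) \<Rightarrow> bool" where
  "stable b ell A \<longleftrightarrow>
     (\<forall>L. is_line L \<and> invariant A L \<longrightarrow> eps (S_of ell L) (alpha b) < 0)"

definition chamber_stable ::
  "((real^'n) \<times> (real^'n)) set \<Rightarrow> ('n \<Rightarrow> (complex^2) set) \<Rightarrow> ('n \<Rightarrow> complex^2^2) \<Rightarrow> bool" where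
  "chamber_stable D ell A \<longleftrightarrow> (\<forall>b\<in>D. stable b ell A)"

definition destabilizing ::
  "((real^'n) \<times> (real^'n)) set \<Rightarrow> ((real^'n) \<times> (real^'n)) set \<Rightarrow>
   ('n \<Rightarrow> (complex^2) set) \<Rightarrow> ('n \<Rightarrow> complex^2^2) \<Rightarrow> (complex^2) set \<Rightarrow> bool" where
  "destabilizing Dm Dp ell A L \<longleftrightarrow>
     is_line L \<and> invariant A L \<and>
     (\<forall>b\<in>Dm. eps (S_of ell L) (alpha b) < 0) \<and>
     (\<forall>b\<in>Dp. \<not> eps (S_of ell L) (alpha b) < 0)"

end

theory Submission
  imports Defs
begin

lemma chamber_props:
  assumes "D \<in> chambers" "b \<in> D"
  shows "b \<in> weight_space" "\<And>T. eps T (alpha b) \<noteq> 0"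
proof -
  have sub: "D \<subseteq> weight_space - \<Union>walls"
    using assms(1) in_components_subset unfolding chambers_def by blast
  show "b \<in> weight_space" using sub assms(2) by blast
  fix T
  have "b \<notin> wall_of T" using sub assms(2) unfolding walls_def by blast
  then show "eps T (alpha b) \<noteq> 0" using \<open>b \<in> weight_space\<close> unfolding wall_of_def by blast
qed

lemma alpha_pos: "b \<in> weight_space \<Longrightarrow> alpha b $ i > 0"
  unfolding weight_space_def alpha_def by (cases b) auto

lemma cont_eps: "continuous_on X (\<lambda>b. eps T (alpha b))"
  unfolding eps_def alpha_def by (intro continuous_intros)

lemma chamber_sign:
  assumes "D \<in> chambers" "b0 \<in> D" "eps T (alpha b0) > 0" "b \<in> D"
  shows "eps T (alpha b) > 0"
proof (rule ccontr)
  assume "\<not> ?thesis"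
  hence neg: "eps T (alpha b) < 0" using chamber_props(2)[OF assms(1,4), of T] by linarith
  have conn: "connected ((\<lambda>b. eps T (alpha b)) ` D)"
    using connected_continuous_image[OF cont_eps in_components_connected] assms(1)
    unfolding chambers_def by blast
  have "(0::real) \<in> (\<lambda>b. eps T (alpha b)) ` D"
    using connectedD_interval[OF conn, of "eps T (alpha b)" "eps T (alpha b0)" 0]
      neg assms(2,3,4) by force
  then show False using chamber_props(2)[OF assms(1)] by force
qed

lemma disj_contra:
  fixes a :: "real^'n"
  assumes pos: "\<And>i. a $ i > 0" and d: "S1 \<inter> S2 = {}"
    and e1: "eps S1 a > 0" and e2: "eps S2 a > 0"
  shows False
proof -
  have "S2 \<subseteq> - S1" "S1 \<subseteq> - S2" using d by auto
  have m1: "(\<Sum>i\<in>S2. a$i) \<le> (\<Sum>i\<in>- S1. a$i)"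
    by (rule sum_mono2) (use d pos less_imp_le in auto)
  have m2: "(\<Sum>i\<in>S1. a$i) \<le> (\<Sum>i\<in>- S2. a$i)"
    by (rule sum_mono2) (use d pos less_imp_le in auto)
  show False using m1 m2 e1 e2 unfolding eps_def by linarith
qed

theorem mainTheorem6:
  fixes p :: "(real^'n) \<times> (real^'n)"
    and W :: "((real^'n) \<times> (real^'n)) set"
    and S :: "'n set"
    and Dp Dm :: "((real^'n) \<times> (real^'n)) set"
    and ell :: "'n \<Rightarrow> (complex^2) set"
    and A :: "'n \<Rightarrow> complex^2^2"
  assumes "p \<in> weight_space"
    and "{V \<in> walls. p \<in> V} = {W}"
    and "W = wall_of S"
    and "Dp \<in> chambers" and "Dm \<in> chambers"
    and "p \<in> closure Dp" and "p \<in> closure Dm"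
    and "\<forall>b\<in>Dp. eps S (alpha b) > 0"
    and "\<forall>b\<in>Dm. eps S (alpha b) < 0"
    and "is_PHB ell A"
    and "chamber_stable Dm ell A"
    and "\<not> chamber_stable Dp ell A"
  shows "\<exists>!L. destabilizing Dm Dp ell A L"
proof -
  from assms(12) obtain b0 L where b0: "b0 \<in> Dp" and L: "is_line L" "invariant A L"
    and ge: "\<not> eps (S_of ell L) (alpha b0) < 0"
    unfolding chamber_stable_def stable_def by blast
  have gt: "eps (S_of ell L) (alpha b0) > 0"
    using ge chamber_props(2)[OF assms(4) b0, of "S_of ell L"] by linarith
  have dL: "destabilizing Dm Dp ell A L"
    unfolding destabilizing_def
    using L assms(11) chamber_sign[OF assms(4) b0 gt]
    unfolding chamber_stable_def stable_def by force
  have uniq: "L1 = L2" if "destabilizing Dm Dp ell A L1" "destabilizing Dm Dp ell A L2" for L1 L2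
  proof (rule ccontr)
    assume ne: "L1 \<noteq> L2"
    have d: "S_of ell L1 \<inter> S_of ell L2 = {}" using ne unfolding S_of_def by auto
    have w: "b0 \<in> weight_space" using chamber_props(1)[OF assms(4) b0] .
    have "eps (S_of ell L1) (alpha b0) > 0" "eps (S_of ell L2) (alpha b0) > 0"
      using that b0 chamber_props(2)[OF assms(4) b0] unfolding destabilizing_def
      by (meson linorder_neqE_linordered_idom)+
    then show False using disj_contra[OF alpha_pos[OF w] d] by blast
  qed
  show ?thesis using dL uniq by blast
qed

end
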